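(* Let $k\ge3$ and $m\ge1$ be integers, let $\alpha\in(0,1)$, and let $F$ be a $k$-partite $k$-graph each of whose parts has exactly $m$ vertices. There exist $\eta>0$ and $n_0$ such that for every $n\ge n_0$ the following holds: if $H$ is a $k$-partite $k$-graph each of whose parts has exactly $n$ vertices and $\delta'_{k-1}(H)\ge\alpha n$, then every vertex $v\in V(H)$ is contained in at least $\eta n^{km-1}$ copies of $F$ in $H$.
   Context: A $k$-partite $k$-graph $H$ is a $k$-graph with a fixed partition $V(H)=V_1\cup\dots\cup V_k$ (its parts) such that every edge meets each $V_i$ in at most one vertex. A set $S$ is legal if $|S\cap V_i|\le1$ for all $i$. $\deg_H(S)$ is the number of $(k-|S|)$-sets $S'$ with $S\cup S'\in E(H)$; $\delta'_{k-1}(H)$ is the minimum of $\deg_H(S)$ over legal $(k-1)$-sets $S$. A copy of $F$ in $H$ is a subgraph of $H$ isomorphic to $F$. *)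

theory Defs
  imports Complex_Main
begin

definition vset :: "nat \<Rightarrow> (nat \<Rightarrow> 'a set) \<Rightarrow> 'a set" where
  "vset k P = (\<Union>i<k. P i)"

definition kpartite_kgraph :: "nat \<Rightarrow> (nat \<Rightarrow> 'a set) \<Rightarrow> 'a set set \<Rightarrow> bool" where
  "kpartite_kgraph k P E \<longleftrightarrow>
     (\<forall>i<k. finite (P i)) \<and>
     (\<forall>i<k. \<forall>j<k. i \<noteq> j \<longrightarrow> P i \<inter> P j = {}) \<and>
     (\<forall>e\<in>E. e \<subseteq> vset k P \<and> card e = k \<and> (\<forall>i<k. card (e \<inter> P i) \<le> 1))"

definition legal :: "nat \<Rightarrow> (nat \<Rightarrow> 'a set) \<Rightarrow> 'a set \<Rightarrow> bool" where
  "legal k P S \<longleftrightarrow> (\<forall>i<k. card (S \<inter> P i) \<le> 1)"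

definition deg :: "nat \<Rightarrow> 'a set set \<Rightarrow> 'a set \<Rightarrow> nat" where
  "deg k E S = card {S'. card S' = k - card S \<and> S \<union> S' \<in> E}"

definition min_codeg :: "nat \<Rightarrow> (nat \<Rightarrow> 'a set) \<Rightarrow> 'a set set \<Rightarrow> nat" where
  "min_codeg k P E =
     Min (deg k E ` {S. S \<subseteq> vset k P \<and> card S = k - 1 \<and> legal k P S})"

definition hg_iso :: "'a set \<Rightarrow> 'a set set \<Rightarrow> 'b set \<Rightarrow> 'b set set \<Rightarrow> bool" where
  "hg_iso V1 E1 V2 E2 \<longleftrightarrow>
     (\<exists>f. bij_betw f V1 V2 \<and> bij_betw (\<lambda>e. f ` e) E1 E2)"

definition copies :: "'a set \<Rightarrow> 'a set set \<Rightarrow> 'b set \<Rightarrow> 'b set set \<Rightarrow> ('a set \<times> 'a set set) set" where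
  "copies V E VF EF =
     {(W, E'). W \<subseteq> V \<and> E' \<subseteq> E \<and> (\<forall>e\<in>E'. e \<subseteq> W) \<and> hg_iso W E' VF EF}"

end

theory Submission
  imports Defs "HOL-Library.FuncSet"
begin


lemma cheb_aux:
  fixes f g :: "'i \<Rightarrow> real"
  assumes "finite I" and "\<And>i j. i \<in> I \<Longrightarrow> j \<in> I \<Longrightarrow> (f i - f j) * (g i - g j) \<ge> 0"
  shows "(\<Sum>i\<in>I. f i) * (\<Sum>i\<in>I. g i) \<le> real (card I) * (\<Sum>i\<in>I. f i * g i)"
proof -
  have "0 \<le> (\<Sum>i\<in>I. \<Sum>j\<in>I. (f i - f j) * (g i - g j))"
    using assms by (intro sum_nonneg) auto
  also have "\<dots> = (\<Sum>i\<in>I. \<Sum>j\<in>I. f i * g i + f j * g j - f i * g j - f j * g i)"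
    by (simp add: algebra_simps)
  also have "\<dots> = 2 * (real (card I) * (\<Sum>i\<in>I. f i * g i) - (\<Sum>i\<in>I. f i) * (\<Sum>i\<in>I. g i))"
    by (simp add: sum.distrib sum_subtractf sum_distrib_left sum_distrib_right algebra_simps
        sum.swap[of "\<lambda>i j. f j * g i"])
  finally show ?thesis by simp
qed

lemma power_mean:
  fixes f :: "'i \<Rightarrow> real"
  assumes "finite I" and "\<And>i. i \<in> I \<Longrightarrow> f i \<ge> 0"
  shows "(\<Sum>i\<in>I. f i) ^ Suc p \<le> real (card I) ^ p * (\<Sum>i\<in>I. f i ^ Suc p)"
proof (induction p)
  case 0 then show ?case by simp
next
  case (Suc p)
  have nn: "0 \<le> (\<Sum>i\<in>I. f i)" using assms by (intro sum_nonneg) auto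
  have ch: "(\<Sum>i\<in>I. f i) * (\<Sum>i\<in>I. f i ^ Suc p) \<le> real (card I) * (\<Sum>i\<in>I. f i * f i ^ Suc p)"
  proof (rule cheb_aux[OF assms(1)])
    fix i j assume "i \<in> I" "j \<in> I"
    then have a: "f i \<ge> 0" "f j \<ge> 0" using assms by auto
    show "(f i - f j) * (f i ^ Suc p - f j ^ Suc p) \<ge> 0"
    proof (cases "f i \<le> f j")
      case True
      then have "f i ^ Suc p \<le> f j ^ Suc p" using a by (intro power_mono) auto
      then show ?thesis using True by (intro mult_nonpos_nonpos) auto
    next
      case False
      then have "f j ^ Suc p \<le> f i ^ Suc p" using a by (intro power_mono) auto
      then show ?thesis using False by (intro mult_nonneg_nonneg) auto
    qed
  qed
  have "(\<Sum>i\<in>I. f i) ^ Suc (Suc p) = (\<Sum>i\<in>I. f i) * (\<Sum>i\<in>I. f i) ^ Suc p" by simp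
  also have "\<dots> \<le> (\<Sum>i\<in>I. f i) * (real (card I) ^ p * (\<Sum>i\<in>I. f i ^ Suc p))"
    using Suc nn by (intro mult_left_mono) auto
  also have "\<dots> = real (card I) ^ p * ((\<Sum>i\<in>I. f i) * (\<Sum>i\<in>I. f i ^ Suc p))" by simp
  also have "\<dots> \<le> real (card I) ^ p * (real (card I) * (\<Sum>i\<in>I. f i * f i ^ Suc p))"
    using ch by (intro mult_left_mono) auto
  also have "\<dots> = real (card I) ^ Suc p * (\<Sum>i\<in>I. f i ^ Suc (Suc p))" by simp
  finally show ?case .
qed



definition Tup :: "(nat \<Rightarrow> 'a set) \<Rightarrow> nat \<Rightarrow> 'a list set" where
  "Tup A r = {t. length t = r \<and> (\<forall>i<r. t!i \<in> A i)}"
definition Cfg :: "nat \<Rightarrow> (nat \<Rightarrow> 'a set) \<Rightarrow> nat \<Rightarrow> 'a list list set" where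
  "Cfg m A r = {X. length X = r \<and> (\<forall>i<r. length (X!i) = m \<and> set (X!i) \<subseteq> A i)}"
definition tr :: "'a list list \<Rightarrow> nat list \<Rightarrow> 'a list" where
  "tr X a = map (\<lambda>i. X!i!(a!i)) [0..<length X]"
definition cpl :: "nat \<Rightarrow> 'a list set \<Rightarrow> 'a list list \<Rightarrow> bool" where
  "cpl m R X \<longleftrightarrow> (\<forall>a. length a = length X \<longrightarrow> (\<forall>j\<in>set a. j<m) \<longrightarrow> tr X a \<in> R)"
definition hom :: "nat \<Rightarrow> (nat \<Rightarrow> 'a set) \<Rightarrow> nat \<Rightarrow> 'a list set \<Rightarrow> nat" where
  "hom m A r R = card {X \<in> Cfg m A r. cpl m R X}"
definition sl :: "'a list set \<Rightarrow> 'a \<Rightarrow> 'a list set" where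
  "sl R y = {t. t @ [y] \<in> R}"

lemma Tup_0: "Tup A 0 = {[]}" by (auto simp: Tup_def)
lemma Tup_Suc: "Tup A (Suc r) = (\<lambda>(t,y). t @ [y]) ` (Tup A r \<times> A r)"
proof (rule set_eqI, rule iffI)
  fix x assume "x \<in> Tup A (Suc r)"
  then have x: "length x = Suc r" "\<forall>i<Suc r. x!i \<in> A i" by (auto simp: Tup_def)
  then obtain t y where ty: "x = t @ [y]" by (metis length_Suc_conv_rev)
  then have "length t = r" using x by simp
  moreover have "\<forall>i<r. t!i \<in> A i" using x ty \<open>length t = r\<close> by (metis less_SucI nth_append)
  moreover have "y \<in> A r" using x ty \<open>length t = r\<close> by (metis lessI nth_append_length)
  ultimately show "x \<in> (\<lambda>(t,y). t @ [y]) ` (Tup A r \<times> A r)" using ty by (force simp: Tup_def)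
next
  fix x assume "x \<in> (\<lambda>(t,y). t @ [y]) ` (Tup A r \<times> A r)"
  then show "x \<in> Tup A (Suc r)" by (auto simp: Tup_def nth_append less_Suc_eq)
qed

lemma inj_snoc: "inj (\<lambda>(t,y). t @ [y])"
  by (auto simp: inj_def)

lemma Tup_fin_card:
  assumes "\<forall>i<r. finite (A i) \<and> card (A i) = n"
  shows "finite (Tup A r) \<and> card (Tup A r) = n ^ r"
  using assms
proof (induction r)
  case 0 then show ?case by (simp add: Tup_0)
next
  case (Suc r)
  then have ih: "finite (Tup A r)" "card (Tup A r) = n ^ r" by auto
  have a: "finite (A r)" "card (A r) = n" using Suc.prems by auto
  show ?case unfolding Tup_Suc
    using ih a by (simp add: card_image inj_on_subset[OF inj_snoc] card_cartesian_product)
qed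

lemma Cfg_0: "Cfg m A 0 = {[]}" by (auto simp: Cfg_def)
lemma Cfg_Suc: "Cfg m A (Suc r) = (\<lambda>(t,y). t @ [y]) ` (Cfg m A r \<times> {ys. set ys \<subseteq> A r \<and> length ys = m})"
proof (rule set_eqI, rule iffI)
  fix x assume "x \<in> Cfg m A (Suc r)"
  then have x: "length x = Suc r" "\<forall>i<Suc r. length (x!i) = m \<and> set (x!i) \<subseteq> A i" by (auto simp: Cfg_def)
  then obtain t y where ty: "x = t @ [y]" by (metis length_Suc_conv_rev)
  then have "length t = r" using x by simp
  moreover have "\<forall>i<r. length (t!i) = m \<and> set (t!i) \<subseteq> A i" using x ty \<open>length t = r\<close> by (metis less_SucI nth_append)
  moreover have "length y = m \<and> set y \<subseteq> A r" using x ty \<open>length t = r\<close> by (metis lessI nth_append_length)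
  ultimately show "x \<in> (\<lambda>(t,y). t @ [y]) ` (Cfg m A r \<times> {ys. set ys \<subseteq> A r \<and> length ys = m})" using ty by (force simp: Cfg_def)
next
  fix x assume "x \<in> (\<lambda>(t,y). t @ [y]) ` (Cfg m A r \<times> {ys. set ys \<subseteq> A r \<and> length ys = m})"
  then obtain t y where "x = t @ [y]" "t \<in> Cfg m A r" "set y \<subseteq> A r" "length y = m" by auto
  then show "x \<in> Cfg m A (Suc r)" unfolding Cfg_def
  proof (intro CollectI conjI allI impI)
    fix i assume "i < Suc r"
    then consider "i < r" | "i = r" by linarith
    then show "length (x!i) = m" "set (x!i) \<subseteq> A i"
      using \<open>x = t @ [y]\<close> \<open>t \<in> Cfg m A r\<close> \<open>set y \<subseteq> A r\<close> \<open>length y = m\<close>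
      by (cases; simp add: Cfg_def nth_append)+
  qed (use \<open>x = t @ [y]\<close> \<open>t \<in> Cfg m A r\<close> in \<open>simp add: Cfg_def\<close>)
qed

lemma Cfg_fin_card:
  assumes "\<forall>i<r. finite (A i) \<and> card (A i) = n"
  shows "finite (Cfg m A r) \<and> card (Cfg m A r) = n ^ (m * r)"
  using assms
proof (induction r)
  case 0 then show ?case by (simp add: Cfg_0)
next
  case (Suc r)
  then have ih: "finite (Cfg m A r)" "card (Cfg m A r) = n ^ (m*r)" by auto
  have a: "finite (A r)" "card (A r) = n" using Suc.prems by auto
  show ?case unfolding Cfg_Suc
    using ih a by (simp add: card_image inj_on_subset[OF inj_snoc] card_cartesian_product
        finite_lists_length_eq card_lists_length_eq power_add)
qed

lemma tr_snoc: "length a = length X \<Longrightarrow> tr (X @ [ys]) (a @ [j]) = tr X a @ [ys ! j]"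
  by (auto simp: tr_def nth_append intro!: nth_equalityI)

lemma cpl_snoc:
  assumes "length ys = m"
  shows "cpl m R (X @ [ys]) \<longleftrightarrow> (\<forall>y\<in>set ys. cpl m (sl R y) X)"
proof
  assume c: "cpl m R (X @ [ys])"
  show "\<forall>y\<in>set ys. cpl m (sl R y) X"
  proof (intro ballI)
    fix y assume "y \<in> set ys"
    then obtain j where j: "j < m" "ys ! j = y" using assms by (auto simp: in_set_conv_nth)
    show "cpl m (sl R y) X" unfolding cpl_def sl_def
    proof (intro allI impI, simp)
      fix a :: "nat list" assume a: "length a = length X" "\<forall>j\<in>set a. j < m"
      have "tr (X @ [ys]) (a @ [j]) \<in> R" using c a j unfolding cpl_def by auto
      then show "tr X a @ [y] \<in> R" using tr_snoc[OF a(1)] j by simp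
    qed
  qed
next
  assume c: "\<forall>y\<in>set ys. cpl m (sl R y) X"
  show "cpl m R (X @ [ys])" unfolding cpl_def
  proof (intro allI impI)
    fix a' :: "nat list" assume a: "length a' = length (X @ [ys])" "\<forall>j\<in>set a'. j < m"
    then obtain a j where aj: "a' = a @ [j]" by (metis length_Suc_conv_rev length_append_singleton)
    then have l: "length a = length X" "j < m" "\<forall>j\<in>set a. j < m" using a by auto
    then have "ys ! j \<in> set ys" using assms by auto
    then have "tr X a @ [ys!j] \<in> R" using c l unfolding cpl_def sl_def by auto
    then show "tr (X @ [ys]) a' \<in> R" using tr_snoc[OF l(1)] aj by simp
  qed
qed

lemma cpl_Nil: "cpl m R [] \<longleftrightarrow> [] \<in> R"
  by (auto simp: cpl_def tr_def)

lemma cpl_Int: "cpl m (R \<inter> S) X \<longleftrightarrow> cpl m R X \<and> cpl m S X"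
  by (auto simp: cpl_def)

lemma sl_Tup: "R \<subseteq> Tup A (Suc r) \<Longrightarrow> sl R y \<subseteq> Tup A r"
  by (auto simp: sl_def Tup_def nth_append less_Suc_eq)

lemma Tup_finite: "\<forall>i<r. finite (A i) \<Longrightarrow> finite (Tup A r)"
proof (induction r)
  case 0 then show ?case by (simp add: Tup_0)
next
  case (Suc r) then show ?case unfolding Tup_Suc by auto
qed

lemma card_R_split:
  assumes "\<forall>i<Suc r. finite (A i)" "R \<subseteq> Tup A (Suc r)"
  shows "card R = (\<Sum>y\<in>A r. card (sl R y))"
proof -
  have fin: "finite (Tup A r)" "finite (A r)" using assms(1) Tup_finite[of r A] by auto
  have R: "R = (\<Union>y\<in>A r. (\<lambda>t. t @ [y]) ` sl R y)"
  proof (rule set_eqI, rule iffI)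
    fix x assume "x \<in> R"
    then have "x \<in> Tup A (Suc r)" using assms by auto
    then obtain t y where "x = t @ [y]" "y \<in> A r" unfolding Tup_Suc by auto
    then show "x \<in> (\<Union>y\<in>A r. (\<lambda>t. t @ [y]) ` sl R y)" using \<open>x \<in> R\<close> by (auto simp: sl_def)
  qed (auto simp: sl_def)
  have "card (\<Union>y\<in>A r. (\<lambda>t. t @ [y]) ` sl R y) = (\<Sum>y\<in>A r. card ((\<lambda>t. t @ [y]) ` sl R y))"
  proof (rule card_UN_disjoint[OF fin(2)])
    show "\<forall>i\<in>A r. finite ((\<lambda>t. t @ [i]) ` sl R i)"
      using sl_Tup[OF assms(2)] fin by (meson finite_imageI finite_subset)
  qed auto
  also have "\<dots> = (\<Sum>y\<in>A r. card (sl R y))"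
    by (intro sum.cong refl card_image) (auto simp: inj_on_def)
  finally show ?thesis using R by simp
qed



definition NN :: "nat \<Rightarrow> (nat \<Rightarrow> 'a set) \<Rightarrow> nat \<Rightarrow> 'a list set \<Rightarrow> 'a list list \<Rightarrow> 'a set" where
  "NN m A r R X = {y\<in>A r. cpl m (sl R y) X}"

lemma Cfg_finite: "\<forall>i<r. finite (A i) \<Longrightarrow> finite (Cfg m A r)"
proof (induction r)
  case 0 then show ?case by (simp add: Cfg_0)
next
  case (Suc r) then show ?case unfolding Cfg_Suc by (auto simp: finite_lists_length_eq)
qed

lemma card_filter_sum: "finite S \<Longrightarrow> card {x\<in>S. P x} = (\<Sum>x\<in>S. if P x then 1 else 0)"
  by (simp add: sum.inter_filter[symmetric])

lemma hom_Suc: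
  assumes "\<forall>i<Suc r. finite (A i)"
  shows "hom m A (Suc r) R = (\<Sum>X\<in>Cfg m A r. card (NN m A r R X) ^ m)"
proof -
  have fA: "finite (A r)" using assms by auto
  have fC: "finite (Cfg m A r)" using assms Cfg_finite[of r A m] by auto
  have eq: "{X \<in> Cfg m A (Suc r). cpl m R X} =
     (\<lambda>(t,y). t @ [y]) ` (SIGMA X:Cfg m A r. {ys. set ys \<subseteq> NN m A r R X \<and> length ys = m})"
  proof (rule set_eqI, rule iffI)
    fix x assume "x \<in> {X \<in> Cfg m A (Suc r). cpl m R X}"
    then have x: "x \<in> Cfg m A (Suc r)" "cpl m R x" by auto
    have "x \<in> (\<lambda>(t,y). t @ [y]) ` (Cfg m A r \<times> {ys. set ys \<subseteq> A r \<and> length ys = m})"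
      using x(1) by (simp only: Cfg_Suc)
    then obtain p where p: "p \<in> Cfg m A r \<times> {ys. set ys \<subseteq> A r \<and> length ys = m}" "x = (\<lambda>(t,y). t @ [y]) p"
      by (rule imageE)
    obtain t ys where "p = (t, ys)" by (cases p)
    then have t: "x = t @ [ys]" "t \<in> Cfg m A r" "set ys \<subseteq> A r" "length ys = m" using p by auto
    then have "\<forall>y\<in>set ys. cpl m (sl R y) t" using x(2) cpl_snoc[of ys m R t] by simp
    then have "set ys \<subseteq> NN m A r R t" using t unfolding NN_def by auto
    then show "x \<in> (\<lambda>(t,y). t @ [y]) ` (SIGMA X:Cfg m A r. {ys. set ys \<subseteq> NN m A r R X \<and> length ys = m})"
      using t by auto
  next
    fix x assume "x \<in> (\<lambda>(t,y). t @ [y]) ` (SIGMA X:Cfg m A r. {ys. set ys \<subseteq> NN m A r R X \<and> length ys = m})"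
    then obtain p where p: "p \<in> (SIGMA X:Cfg m A r. {ys. set ys \<subseteq> NN m A r R X \<and> length ys = m})" "x = (\<lambda>(t,y). t @ [y]) p"
      by (rule imageE)
    obtain t ys where "p = (t, ys)" by (cases p)
    then have t: "x = t @ [ys]" "t \<in> Cfg m A r" "set ys \<subseteq> NN m A r R t" "length ys = m" using p by auto
    then have "set ys \<subseteq> A r" unfolding NN_def by auto
    then have "(t,ys) \<in> Cfg m A r \<times> {ys. set ys \<subseteq> A r \<and> length ys = m}" using t by simp
    then have "x \<in> Cfg m A (Suc r)" unfolding Cfg_Suc by (rule image_eqI[rotated]) (simp add: t(1))
    moreover have "cpl m R x" using t cpl_snoc[of ys m R t] unfolding NN_def by auto
    ultimately show "x \<in> {X \<in> Cfg m A (Suc r). cpl m R X}" by auto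
  qed
  have "hom m A (Suc r) R = card (SIGMA X:Cfg m A r. {ys. set ys \<subseteq> NN m A r R X \<and> length ys = m})"
    unfolding hom_def eq by (intro card_image inj_on_subset[OF inj_snoc]) auto
  also have "\<dots> = (\<Sum>X\<in>Cfg m A r. card {ys. set ys \<subseteq> NN m A r R X \<and> length ys = m})"
    using fC fA by (intro card_SigmaI) (auto simp: NN_def intro!: finite_lists_length_eq)
  also have "\<dots> = (\<Sum>X\<in>Cfg m A r. card (NN m A r R X) ^ m)"
    using fA by (intro sum.cong refl card_lists_length_eq) (auto simp: NN_def)
  finally show ?thesis .
qed

lemma sum_NN:
  assumes "\<forall>i<Suc r. finite (A i)"
  shows "(\<Sum>X\<in>Cfg m A r. card (NN m A r R X)) = (\<Sum>y\<in>A r. hom m A r (sl R y))"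
proof -
  have fA: "finite (A r)" using assms by auto
  have fC: "finite (Cfg m A r)" using assms Cfg_finite[of r A m] by auto
  have "(\<Sum>X\<in>Cfg m A r. card (NN m A r R X)) = (\<Sum>X\<in>Cfg m A r. \<Sum>y\<in>A r. if cpl m (sl R y) X then 1 else 0)"
    unfolding NN_def using fA by (simp add: card_filter_sum)
  also have "\<dots> = (\<Sum>y\<in>A r. \<Sum>X\<in>Cfg m A r. if cpl m (sl R y) X then 1 else 0)"
    by (rule sum.swap)
  also have "\<dots> = (\<Sum>y\<in>A r. hom m A r (sl R y))"
    unfolding hom_def using fC by (simp add: card_filter_sum)
  finally show ?thesis .
qed



lemma hom_lower:
  assumes "\<forall>i<r. finite (A i) \<and> card (A i) = n" "n > 0" "m \<ge> 1" "R \<subseteq> Tup A r"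
  shows "(real (card R) / real n ^ r) ^ (m ^ r) * real n ^ (m * r) \<le> real (hom m A r R)"
  using assms
proof (induction r arbitrary: R)
  case 0
  then have "R \<subseteq> {[]}" by (simp add: Tup_0)
  have "hom m A 0 R = card R"
  proof (cases "R = {}")
    case True then show ?thesis by (simp add: hom_def Cfg_0 cpl_Nil)
  next
    case False then have R: "R = {[]}" using \<open>R \<subseteq> {[]}\<close> by auto
    then have "{X \<in> Cfg m A 0. cpl m R X} = {[]}" unfolding Cfg_0 using cpl_Nil[of m R] by blast
    then show ?thesis using R by (simp add: hom_def)
  qed
  then show ?case by simp
next
  case (Suc r)
  have fin: "\<forall>i<Suc r. finite (A i)" using Suc.prems by auto
  have fA: "finite (A r)" and cA: "card (A r) = n" using Suc.prems by auto
  have fC: "finite (Cfg m A r)" and cC: "card (Cfg m A r) = n ^ (m*r)"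
    using Cfg_fin_card[of r A n m] Suc.prems by auto
  define p where "p = m ^ r"
  have p1: "p \<ge> 1" using Suc.prems unfolding p_def by simp
  define D where "D = real (card R) / real n ^ Suc r"
  have D0: "D \<ge> 0" unfolding D_def by simp
  have nr: "real n > 0" using Suc.prems by simp
  define f where "f y = real (card (sl R y)) / real n ^ r" for y
  have sumf: "(\<Sum>y\<in>A r. f y) = real n * D"
  proof -
    have "(\<Sum>y\<in>A r. f y) = real (\<Sum>y\<in>A r. card (sl R y)) / real n ^ r"
      unfolding f_def by (simp add: sum_divide_distrib)
    also have "\<dots> = real (card R) / real n ^ r"
      using card_R_split[OF fin Suc.prems(4)] by simp
    also have "\<dots> = real n * D" unfolding D_def using nr by (simp add: field_simps)
    finally show ?thesis .
  qed
  have IH: "f y ^ p * real n ^ (m * r) \<le> real (hom m A r (sl R y))" for y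
    unfolding f_def p_def using Suc.IH[of "sl R y"] Suc.prems sl_Tup[OF Suc.prems(4)] by auto
  have pm1: "(\<Sum>y\<in>A r. f y) ^ Suc (p - 1) \<le> real (card (A r)) ^ (p - 1) * (\<Sum>y\<in>A r. f y ^ Suc (p - 1))"
    by (rule power_mean[OF fA]) (simp add: f_def)
  then have "(real n * D) ^ p \<le> real n ^ (p - 1) * (\<Sum>y\<in>A r. f y ^ p)"
    using p1 sumf cA by simp
  then have "real n ^ (p - 1) * (real n * D ^ p) \<le> real n ^ (p - 1) * (\<Sum>y\<in>A r. f y ^ p)"
  proof -
    have "(real n * D) ^ p = real n ^ (p - 1) * (real n * D ^ p)"
      using p1 by (metis (no_types, lifting) Suc_diff_1 le_numeral_extra(2) less_le_trans mult.assoc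
          mult.left_commute power_Suc power_mult_distrib zero_less_one)
    then show ?thesis using \<open>(real n * D) ^ p \<le> real n ^ (p - 1) * (\<Sum>y\<in>A r. f y ^ p)\<close> by simp
  qed
  then have sfp: "real n * D ^ p \<le> (\<Sum>y\<in>A r. f y ^ p)"
    using nr by simp
  define g where "g X = real (card (NN m A r R X))" for X
  define S where "S = (\<Sum>X\<in>Cfg m A r. g X)"
  have S_eq: "S = (\<Sum>y\<in>A r. real (hom m A r (sl R y)))"
    unfolding S_def g_def using sum_NN[OF fin, of m R] by (metis of_nat_sum)
  have "real n ^ (m*r) * (real n * D ^ p) \<le> real n ^ (m*r) * (\<Sum>y\<in>A r. f y ^ p)"
    using sfp by (intro mult_left_mono) simp_all
  also have "\<dots> = (\<Sum>y\<in>A r. f y ^ p * real n ^ (m * r))"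
    by (simp add: sum_distrib_left mult_ac)
  also have "\<dots> \<le> S" unfolding S_eq by (intro sum_mono IH)
  finally have Slow: "real n ^ (m*r) * (real n * D ^ p) \<le> S" .
  have S0: "0 \<le> real n ^ (m*r) * (real n * D ^ p)" using D0 by simp
  obtain m' where m': "m = Suc m'" using Suc.prems by (cases m) auto
  have pm2: "S ^ Suc m' \<le> real (card (Cfg m A r)) ^ m' * (\<Sum>X\<in>Cfg m A r. g X ^ Suc m')"
    unfolding S_def by (rule power_mean[OF fC]) (simp add: g_def)
  have "(real n ^ (m*r) * (real n * D ^ p)) ^ m \<le> S ^ m"
    using Slow S0 by (intro power_mono) auto
  also have "\<dots> \<le> real n ^ (m*r*m') * (\<Sum>X\<in>Cfg m A r. g X ^ m)"
    using pm2 m' cC by (simp add: power_mult)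
  finally have main: "(real n ^ (m*r) * (real n * D ^ p)) ^ m \<le> real n ^ (m*r*m') * (\<Sum>X\<in>Cfg m A r. g X ^ m)" .
  have "(real n ^ (m*r) * (real n * D ^ p)) ^ m = real n ^ (m*r*m') * (D ^ (m ^ Suc r) * real n ^ (m * Suc r))"
  proof -
    have e1: "(real n ^ (m*r) * (real n * D ^ p)) ^ m = real n ^ (m*r*m + m) * D ^ (p*m)"
      by (simp add: power_mult_distrib power_add power_mult)
    have e2: "m*r*m + m = m*r*m' + m*Suc r" using m' by (simp add: algebra_simps)
    have e3: "p*m = m^Suc r" by (simp add: p_def mult.commute)
    show ?thesis unfolding e1 e2 e3 power_add by (simp add: mult_ac)
  qed
  with main have "D ^ (m ^ Suc r) * real n ^ (m * Suc r) \<le> (\<Sum>X\<in>Cfg m A r. g X ^ m)"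
    using nr by simp
  also have "\<dots> = real (hom m A (Suc r) R)"
    unfolding g_def hom_Suc[OF fin] by simp
  finally show ?case unfolding D_def .
qed



lemma hom_set_eq:
"{X \<in> Cfg m A (Suc r). cpl m R X} =
   (\<lambda>(t,y). t @ [y]) ` (SIGMA X:Cfg m A r. {ys. set ys \<subseteq> NN m A r R X \<and> length ys = m})"
proof (rule set_eqI, rule iffI)
  fix x assume "x \<in> {X \<in> Cfg m A (Suc r). cpl m R X}"
  then have x: "x \<in> Cfg m A (Suc r)" "cpl m R x" by auto
  have "x \<in> (\<lambda>(t,y). t @ [y]) ` (Cfg m A r \<times> {ys. set ys \<subseteq> A r \<and> length ys = m})"
    using x(1) by (simp only: Cfg_Suc)
  then obtain p where p: "p \<in> Cfg m A r \<times> {ys. set ys \<subseteq> A r \<and> length ys = m}" "x = (\<lambda>(t,y). t @ [y]) p"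
    by (rule imageE)
  obtain t ys where "p = (t, ys)" by (cases p)
  then have t: "x = t @ [ys]" "t \<in> Cfg m A r" "set ys \<subseteq> A r" "length ys = m" using p by auto
  then have "\<forall>y\<in>set ys. cpl m (sl R y) t" using x(2) cpl_snoc[of ys m R t] by simp
  then have "set ys \<subseteq> NN m A r R t" using t unfolding NN_def by auto
  then show "x \<in> (\<lambda>(t,y). t @ [y]) ` (SIGMA X:Cfg m A r. {ys. set ys \<subseteq> NN m A r R X \<and> length ys = m})"
    using t by auto
next
  fix x assume "x \<in> (\<lambda>(t,y). t @ [y]) ` (SIGMA X:Cfg m A r. {ys. set ys \<subseteq> NN m A r R X \<and> length ys = m})"
  then obtain p where p: "p \<in> (SIGMA X:Cfg m A r. {ys. set ys \<subseteq> NN m A r R X \<and> length ys = m})" "x = (\<lambda>(t,y). t @ [y]) p"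
    by (rule imageE)
  obtain t ys where "p = (t, ys)" by (cases p)
  then have t: "x = t @ [ys]" "t \<in> Cfg m A r" "set ys \<subseteq> NN m A r R t" "length ys = m" using p by auto
  then have "set ys \<subseteq> A r" unfolding NN_def by auto
  then have "(t,ys) \<in> Cfg m A r \<times> {ys. set ys \<subseteq> A r \<and> length ys = m}" using t by simp
  then have "x \<in> Cfg m A (Suc r)" unfolding Cfg_Suc by (rule image_eqI[rotated]) (simp add: t(1))
  moreover have "cpl m R x" using t cpl_snoc[of ys m R t] unfolding NN_def by auto
  ultimately show "x \<in> {X \<in> Cfg m A (Suc r). cpl m R X}" by auto
qed

lemma sumNN_lower:
  assumes "\<forall>i<Suc r. finite (A i) \<and> card (A i) = n" "n > 0" "m \<ge> 1" "R \<subseteq> Tup A (Suc r)"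
  shows "real n ^ (m*r) * (real n * (real (card R) / real n ^ Suc r) ^ (m^r))
     \<le> (\<Sum>X\<in>Cfg m A r. real (card (NN m A r R X)))"
proof -
  have fin: "\<forall>i<Suc r. finite (A i)" using assms by auto
  have fA: "finite (A r)" and cA: "card (A r) = n" using assms by auto
  have fC: "finite (Cfg m A r)" and cC: "card (Cfg m A r) = n ^ (m*r)"
    using Cfg_fin_card[of r A n m] assms by auto
  define p where "p = m ^ r"
  have p1: "p \<ge> 1" using assms unfolding p_def by simp
  define D where "D = real (card R) / real n ^ Suc r"
  have D0: "D \<ge> 0" unfolding D_def by simp
  have nr: "real n > 0" using assms by simp
  define f where "f y = real (card (sl R y)) / real n ^ r" for y
  have sumf: "(\<Sum>y\<in>A r. f y) = real n * D"
  proof -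
    have "(\<Sum>y\<in>A r. f y) = real (\<Sum>y\<in>A r. card (sl R y)) / real n ^ r"
      unfolding f_def by (simp add: sum_divide_distrib)
    also have "\<dots> = real (card R) / real n ^ r"
      using card_R_split[OF fin assms(4)] by simp
    also have "\<dots> = real n * D" unfolding D_def using nr by (simp add: field_simps)
    finally show ?thesis .
  qed
  have IH: "f y ^ p * real n ^ (m * r) \<le> real (hom m A r (sl R y))" for y
    unfolding f_def p_def using hom_lower[of r A n m "sl R y"] assms sl_Tup[OF assms(4)] by auto
  have pm1: "(\<Sum>y\<in>A r. f y) ^ Suc (p - 1) \<le> real (card (A r)) ^ (p - 1) * (\<Sum>y\<in>A r. f y ^ Suc (p - 1))"
    by (rule power_mean[OF fA]) (simp add: f_def)
  then have "(real n * D) ^ p \<le> real n ^ (p - 1) * (\<Sum>y\<in>A r. f y ^ p)"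
    using p1 sumf cA by simp
  then have "real n ^ (p - 1) * (real n * D ^ p) \<le> real n ^ (p - 1) * (\<Sum>y\<in>A r. f y ^ p)"
  proof -
    have "(real n * D) ^ p = real n ^ (p - 1) * (real n * D ^ p)"
      using p1 by (metis (no_types, lifting) Suc_diff_1 le_numeral_extra(2) less_le_trans mult.assoc
          mult.left_commute power_Suc power_mult_distrib zero_less_one)
    then show ?thesis using \<open>(real n * D) ^ p \<le> real n ^ (p - 1) * (\<Sum>y\<in>A r. f y ^ p)\<close> by simp
  qed
  then have sfp: "real n * D ^ p \<le> (\<Sum>y\<in>A r. f y ^ p)"
    using nr by simp
  define g where "g X = real (card (NN m A r R X))" for X
  define S where "S = (\<Sum>X\<in>Cfg m A r. g X)"
  have S_eq: "S = (\<Sum>y\<in>A r. real (hom m A r (sl R y)))"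
    unfolding S_def g_def using sum_NN[OF fin, of m R] by (metis of_nat_sum)
  have "real n ^ (m*r) * (real n * D ^ p) \<le> real n ^ (m*r) * (\<Sum>y\<in>A r. f y ^ p)"
    using sfp by (intro mult_left_mono) simp_all
  also have "\<dots> = (\<Sum>y\<in>A r. f y ^ p * real n ^ (m * r))"
    by (simp add: sum_distrib_left mult_ac)
  also have "\<dots> \<le> S" unfolding S_eq by (intro sum_mono IH)
  finally show ?thesis unfolding S_def g_def D_def p_def .
qed

lemma image_filter: "{x \<in> f ` S. P x} = f ` {s \<in> S. P (f s)}" by auto

lemma homv:
  assumes A: "\<forall>i<Suc r. finite (A i) \<and> card (A i) = n" and n: "n > 0" and m: "m \<ge> 1"
    and R: "R \<subseteq> Tup A (Suc r)" and v: "v \<in> A r" and a0: "0 \<le> \<alpha>"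
    and cod: "\<forall>t\<in>Tup A r. \<alpha> * real n \<le> real (card {y\<in>A r. t @ [y] \<in> R})"
    and Rv: "\<alpha> * real n ^ r \<le> real (card (sl R v))"
  shows "(\<alpha>^2)^(m^r*m) * real n ^ (m * Suc r - 1) \<le> real (card {X\<in>Cfg m A (Suc r). cpl m R X \<and> X!r!0 = v})"
proof -
  have fin: "\<forall>i<Suc r. finite (A i)" using A by auto
  have fA: "finite (A r)" and cA: "card (A r) = n" using A by auto
  have fC: "finite (Cfg m A r)" and cC: "card (Cfg m A r) = n ^ (m*r)"
    using Cfg_fin_card[of r A n m] A by auto
  have nr: "real n > 0" using n by simp
  define p where "p = m ^ r"
  define R' where "R' = {s \<in> R. butlast s @ [v] \<in> R}"
  have R'sub: "R' \<subseteq> Tup A (Suc r)" using R by (auto simp: R'_def)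
  have slR': "sl R' y = sl R y \<inter> sl R v" for y by (auto simp: R'_def sl_def)
  have slv: "sl R v \<subseteq> Tup A r" using sl_Tup[OF R] .
  have finsl: "finite (sl R v)" using slv Tup_finite[of r A] fin by (meson finite_subset less_SucI)
  have "card R' = (\<Sum>y\<in>A r. card (sl R' y))" using card_R_split[OF fin R'sub] .
  also have "\<dots> = (\<Sum>y\<in>A r. \<Sum>t\<in>sl R v. if t \<in> sl R y then 1 else 0)"
  proof (intro sum.cong refl)
    fix y
    have "sl R' y = {t \<in> sl R v. t \<in> sl R y}" unfolding slR' by auto
    then show "card (sl R' y) = (\<Sum>t\<in>sl R v. if t \<in> sl R y then 1 else 0)"
      using card_filter_sum[OF finsl] by simp
  qed
  also have "\<dots> = (\<Sum>t\<in>sl R v. \<Sum>y\<in>A r. if t \<in> sl R y then 1 else 0)" by (rule sum.swap)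
  also have "\<dots> = (\<Sum>t\<in>sl R v. card {y\<in>A r. t @ [y] \<in> R})"
    using card_filter_sum[OF fA] by (simp add: sl_def)
  finally have cR': "card R' = (\<Sum>t\<in>sl R v. card {y\<in>A r. t @ [y] \<in> R})" .
  have "real (card (sl R v)) * (\<alpha> * real n) = (\<Sum>t\<in>sl R v. \<alpha> * real n)" by simp
  also have "\<dots> \<le> (\<Sum>t\<in>sl R v. real (card {y\<in>A r. t @ [y] \<in> R}))"
    using cod slv by (intro sum_mono) auto
  also have "\<dots> = real (card R')" unfolding cR' by simp
  finally have c1: "real (card (sl R v)) * (\<alpha> * real n) \<le> real (card R')" .
  have "\<alpha>^2 * real n ^ Suc r = (\<alpha> * real n ^ r) * (\<alpha> * real n)" by (simp add: power2_eq_square)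
  also have "\<dots> \<le> real (card (sl R v)) * (\<alpha> * real n)"
    using Rv a0 by (intro mult_right_mono) auto
  finally have "\<alpha>^2 * real n ^ Suc r \<le> real (card R')" using c1 by linarith
  then have D': "\<alpha>^2 \<le> real (card R') / real n ^ Suc r" using nr by (simp add: field_simps)
  then have D'p: "(\<alpha>^2)^p \<le> (real (card R') / real n ^ Suc r) ^ p" by (intro power_mono) auto
  define h where "h X = real (card (NN m A r R' X))" for X
  have "real n ^ (m*r) * (real n * (real (card R') / real n ^ Suc r) ^ p) \<le> (\<Sum>X\<in>Cfg m A r. h X)"
    unfolding h_def p_def by (rule sumNN_lower[OF A n m R'sub])
  moreover have "real n ^ (m*r) * (real n * (\<alpha>^2)^p) \<le> real n ^ (m*r) * (real n * (real (card R') / real n ^ Suc r) ^ p)"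
    using D'p by (intro mult_left_mono) auto
  ultimately have hS: "real n ^ (m*r) * (real n * (\<alpha>^2)^p) \<le> (\<Sum>X\<in>Cfg m A r. h X)" by linarith
  define B where "B X = {ys. set ys \<subseteq> NN m A r R X \<and> length ys = m \<and> ys!0 = v}" for X
  have Qeq: "{X\<in>Cfg m A (Suc r). cpl m R X \<and> X!r!0 = v} =
     (\<lambda>(t,y). t @ [y]) ` (SIGMA X:Cfg m A r. B X)"
  proof -
    have "{X\<in>Cfg m A (Suc r). cpl m R X \<and> X!r!0 = v} = {x \<in> {X \<in> Cfg m A (Suc r). cpl m R X}. x!r!0 = v}"
      by auto
    also have "\<dots> = (\<lambda>(t,y). t @ [y]) ` {s \<in> (SIGMA X:Cfg m A r. {ys. set ys \<subseteq> NN m A r R X \<and> length ys = m}).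
          ((\<lambda>(t,y). t @ [y]) s) ! r ! 0 = v}"
      unfolding hom_set_eq by (rule image_filter)
    also have "{s \<in> (SIGMA X:Cfg m A r. {ys. set ys \<subseteq> NN m A r R X \<and> length ys = m}).
          ((\<lambda>(t,y). t @ [y]) s) ! r ! 0 = v} = (SIGMA X:Cfg m A r. B X)"
      unfolding B_def by (auto simp: Cfg_def nth_append)
    finally show ?thesis .
  qed
  have finB: "finite (B X)" for X
  proof -
    have "finite (NN m A r R X)" using fA unfolding NN_def by auto
    moreover have "B X \<subseteq> {xs. set xs \<subseteq> NN m A r R X \<and> length xs = m}" unfolding B_def by auto
    ultimately show ?thesis using finite_lists_length_eq finite_subset by metis
  qed
  have cQ: "card {X\<in>Cfg m A (Suc r). cpl m R X \<and> X!r!0 = v} = (\<Sum>X\<in>Cfg m A r. card (B X))"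
    unfolding Qeq
    by (subst card_image[OF inj_on_subset[OF inj_snoc]]) (auto intro!: card_SigmaI fC finB)
  have inner: "h X ^ m / real n \<le> real (card (B X))" if X: "X \<in> Cfg m A r" for X
  proof (cases "cpl m (sl R v) X")
    case True
    then have NNeq: "NN m A r R' X = NN m A r R X" unfolding NN_def slR' cpl_Int by auto
    have vin: "v \<in> NN m A r R X" using True v unfolding NN_def by auto
    have finN: "finite (NN m A r R X)" using fA unfolding NN_def by auto
    have "B X = (\<lambda>zs. v # zs) ` {zs. set zs \<subseteq> NN m A r R X \<and> length zs = m - 1}"
    proof (rule set_eqI, rule iffI)
      fix ys assume "ys \<in> B X"
      then have ys: "set ys \<subseteq> NN m A r R X" "length ys = m" "ys!0 = v" unfolding B_def by auto
      then obtain z zs where "ys = z # zs" using m by (cases ys) auto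
      then show "ys \<in> (\<lambda>zs. v # zs) ` {zs. set zs \<subseteq> NN m A r R X \<and> length zs = m - 1}"
        using ys by auto
    next
      fix ys assume "ys \<in> (\<lambda>zs. v # zs) ` {zs. set zs \<subseteq> NN m A r R X \<and> length zs = m - 1}"
      then show "ys \<in> B X" unfolding B_def using vin m by auto
    qed
    then have cB: "card (B X) = card (NN m A r R X) ^ (m - 1)"
      using card_lists_length_eq[OF finN] by (simp add: card_image)
    have cN: "card (NN m A r R X) \<le> n" using cA fA unfolding NN_def
      by (metis (no_types, lifting) card_mono mem_Collect_eq subsetI)
    have hm: "h X = real (card (NN m A r R X))" unfolding h_def NNeq ..
    have "h X ^ m = h X ^ (m - 1) * h X" using m by (metis One_nat_def Suc_diff_le diff_Suc_1 power_Suc2)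
    also have "\<dots> \<le> h X ^ (m - 1) * real n" using cN hm by (intro mult_left_mono) (auto simp: h_def)
    finally have "h X ^ m / real n \<le> h X ^ (m - 1)" using nr by (simp add: field_simps)
    then show ?thesis using cB hm by simp
  next
    case False
    then have "NN m A r R' X = {}" unfolding NN_def slR' cpl_Int by auto
    then show ?thesis using m by (simp add: h_def power_0_left)
  qed
  obtain m' where m': "m = Suc m'" using m by (cases m) auto
  have pm: "(\<Sum>X\<in>Cfg m A r. h X) ^ Suc m' \<le> real (card (Cfg m A r)) ^ m' * (\<Sum>X\<in>Cfg m A r. h X ^ Suc m')"
    by (rule power_mean[OF fC]) (simp add: h_def)
  have L0: "0 \<le> real n ^ (m*r) * (real n * (\<alpha>^2)^p)" by simp
  have "(real n ^ (m*r) * (real n * (\<alpha>^2)^p)) ^ m \<le> (\<Sum>X\<in>Cfg m A r. h X) ^ m"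
    using hS L0 by (intro power_mono) auto
  also have "\<dots> \<le> real n ^ (m*r*m') * (\<Sum>X\<in>Cfg m A r. h X ^ m)"
    using pm m' cC by (simp add: power_mult)
  finally have main: "(real n ^ (m*r) * (real n * (\<alpha>^2)^p)) ^ m \<le> real n ^ (m*r*m') * (\<Sum>X\<in>Cfg m A r. h X ^ m)" .
  have ex: "m*r*m + m = m*r*m' + 1 + (m * Suc r - 1)" using m' by (simp add: algebra_simps)
  have "(real n ^ (m*r) * (real n * (\<alpha>^2)^p)) ^ m = real n ^ (m*r*m + m) * (\<alpha>^2)^(p*m)"
    by (simp add: power_mult_distrib power_add power_mult)
  also have "\<dots> = real n ^ (m*r*m') * real n * (real n ^ (m * Suc r - 1) * (\<alpha>^2)^(p*m))"
    unfolding ex power_add by simp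
  finally have "real n ^ (m*r*m') * (real n * (real n ^ (m * Suc r - 1) * (\<alpha>^2)^(p*m)))
     \<le> real n ^ (m*r*m') * (\<Sum>X\<in>Cfg m A r. h X ^ m)" using main by (simp add: mult_ac)
  then have "real n * (real n ^ (m * Suc r - 1) * (\<alpha>^2)^(p*m)) \<le> (\<Sum>X\<in>Cfg m A r. h X ^ m)"
    using nr by simp
  then have "real n ^ (m * Suc r - 1) * (\<alpha>^2)^(p*m) \<le> (\<Sum>X\<in>Cfg m A r. h X ^ m) / real n"
    using nr by (simp add: field_simps)
  also have "\<dots> = (\<Sum>X\<in>Cfg m A r. h X ^ m / real n)" by (simp add: sum_divide_distrib)
  also have "\<dots> \<le> (\<Sum>X\<in>Cfg m A r. real (card (B X)))" by (intro sum_mono inner)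
  also have "\<dots> = real (card {X\<in>Cfg m A (Suc r). cpl m R X \<and> X!r!0 = v})" unfolding cQ by simp
  finally show ?thesis unfolding p_def by (simp add: mult_ac)
qed



lemma edge_meets_all:
  assumes "kpartite_kgraph k P E" "e \<in> E" "i < k"
  shows "card (e \<inter> P i) = 1"
proof -
  have ek: "card e = k" and ev: "e \<subseteq> vset k P" and le1: "\<forall>i<k. card (e \<inter> P i) \<le> 1"
    using assms(1,2) unfolding kpartite_kgraph_def by auto
  have fe: "finite e" using ek assms(3) by (metis card.infinite less_zeroE)
  have "e = (\<Union>i<k. e \<inter> P i)" using ev unfolding vset_def by auto
  then have "card e \<le> (\<Sum>i<k. card (e \<inter> P i))" by (metis card_UN_le finite_lessThan)
  show ?thesis
  proof (rule ccontr)
    assume "card (e \<inter> P i) \<noteq> 1"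
    then have c0: "card (e \<inter> P i) = 0" using le1 assms(3) by fastforce
    have "(\<Sum>i<k. card (e \<inter> P i)) = card (e \<inter> P i) + (\<Sum>j\<in>{..<k} - {i}. card (e \<inter> P j))"
      using assms(3) by (simp add: sum.remove)
    also have "\<dots> \<le> 0 + card ({..<k} - {i})"
    proof -
      have "(\<Sum>j\<in>{..<k} - {i}. card (e \<inter> P j)) \<le> of_nat (card ({..<k} - {i})) * 1"
        by (rule sum_bounded_above) (use le1 in auto)
      then show ?thesis using c0 by simp
    qed
    also have "\<dots> = k - 1" using assms(3) by simp
    finally have "card e \<le> k - 1" using \<open>card e \<le> (\<Sum>i<k. card (e \<inter> P i))\<close> by linarith
    then show False using ek assms(3) by linarith
  qed
qed

lemma list_parts:
  assumes kp: "kpartite_kgraph k P E" and L: "length t = L"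
    and s: "\<forall>i<L. t!i \<in> P (\<sigma> i)" and inj: "inj_on \<sigma> {..<L}" and rng: "\<forall>i<L. \<sigma> i < k"
  shows "distinct t" "card (set t) = L" "legal k P (set t)" "set t \<subseteq> vset k P"
    "\<And>q. q < k \<Longrightarrow> q \<notin> \<sigma> ` {..<L} \<Longrightarrow> set t \<inter> P q = {}"
proof -
  have disj: "\<forall>i<k. \<forall>j<k. i \<noteq> j \<longrightarrow> P i \<inter> P j = {}" using kp unfolding kpartite_kgraph_def by auto
  have same: "\<sigma> a = q" if "a < L" "t!a \<in> P q" "q < k" for a q
    using disj s rng that by blast
  show dt: "distinct t" unfolding distinct_conv_nth
  proof (intro allI impI)
    fix a b assume ab: "a < length t" "b < length t" "a \<noteq> b"
    show "t!a \<noteq> t!b"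
    proof
      assume "t!a = t!b"
      then have "\<sigma> b = \<sigma> a" using same[of b "\<sigma> a"] s rng ab L by auto
      then show False using inj ab L unfolding inj_on_def by auto
    qed
  qed
  then show "card (set t) = L" using L by (simp add: distinct_card)
  show "legal k P (set t)" unfolding legal_def
  proof (intro allI impI)
    fix q assume q: "q < k"
    have "\<forall>x\<in>set t \<inter> P q. \<forall>y\<in>set t \<inter> P q. x = y"
    proof (intro ballI)
      fix x y assume "x \<in> set t \<inter> P q" "y \<in> set t \<inter> P q"
      then obtain a b where "a < L" "b < L" "x = t!a" "y = t!b" "t!a \<in> P q" "t!b \<in> P q"
        using L by (auto simp: in_set_conv_nth)
      then show "x = y" using same q inj unfolding inj_on_def by (metis lessThan_iff)
    qed
    then show "card (set t \<inter> P q) \<le> 1" by (simp add: card_le_Suc0_iff_eq)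
  qed
  show "set t \<subseteq> vset k P" unfolding vset_def using s rng L by (force simp: in_set_conv_nth)
  fix q assume "q < k" "q \<notin> \<sigma> ` {..<L}"
  then show "set t \<inter> P q = {}" using same L by (force simp: in_set_conv_nth)
qed

lemma codeg:
  assumes kp: "kpartite_kgraph k P E" and k: "k \<ge> 1"
    and S: "S \<subseteq> vset k P" "card S = k - 1" "legal k P S" and i: "i < k" "S \<inter> P i = {}"
  shows "min_codeg k P E \<le> card {y\<in>P i. insert y S \<in> E}"
proof -
  have finV: "finite (vset k P)" using kp unfolding kpartite_kgraph_def vset_def by auto
  have "min_codeg k P E \<le> deg k E S" unfolding min_codeg_def
    by (rule Min_le) (use S finV in \<open>auto intro: finite_subset[of _ "Pow (vset k P)"]\<close>)
  also have "deg k E S = card {y\<in>P i. insert y S \<in> E}"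
  proof -
    have kk: "k - card S = 1" using S k by simp
    have "{S'. card S' = k - card S \<and> S \<union> S' \<in> E} = (\<lambda>y. {y}) ` {y\<in>P i. insert y S \<in> E}"
    proof (rule set_eqI, rule iffI)
      fix S' assume "S' \<in> {S'. card S' = k - card S \<and> S \<union> S' \<in> E}"
      then have c1: "card S' = 1" and eS: "S \<union> S' \<in> E" using kk by auto
      then obtain y where y: "S' = {y}" by (metis card_1_singletonE)
      have "card ((S \<union> S') \<inter> P i) = 1" by (rule edge_meets_all[OF kp eS i(1)])
      then have "(S \<union> S') \<inter> P i \<noteq> {}" by auto
      then have "y \<in> P i" using i(2) y by auto
      then show "S' \<in> (\<lambda>y. {y}) ` {y\<in>P i. insert y S \<in> E}" using y eS by auto
    next
      fix S' assume "S' \<in> (\<lambda>y. {y}) ` {y\<in>P i. insert y S \<in> E}"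
      then show "S' \<in> {S'. card S' = k - card S \<and> S \<union> S' \<in> E}" using kk by auto
    qed
    then show ?thesis unfolding deg_def by (simp add: card_image)
  qed
  finally show ?thesis .
qed

lemma card_R_split2:
  assumes "\<forall>i<Suc r. finite (A i)" "R \<subseteq> Tup A (Suc r)"
  shows "card R = (\<Sum>t\<in>Tup A r. card {y\<in>A r. t @ [y] \<in> R})"
proof -
  have fT: "finite (Tup A r)" using assms Tup_finite[of r A] by auto
  have fA: "finite (A r)" using assms by auto
  have "card R = (\<Sum>y\<in>A r. card (sl R y))" by (rule card_R_split[OF assms])
  also have "\<dots> = (\<Sum>y\<in>A r. \<Sum>t\<in>Tup A r. if t @ [y] \<in> R then 1 else 0)"
  proof (intro sum.cong refl)
    fix y
    have "sl R y = {t\<in>Tup A r. t @ [y] \<in> R}" using sl_Tup[OF assms(2)] by (auto simp: sl_def)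
    then show "card (sl R y) = (\<Sum>t\<in>Tup A r. if t @ [y] \<in> R then 1 else 0)"
      using card_filter_sum[OF fT] by simp
  qed
  also have "\<dots> = (\<Sum>t\<in>Tup A r. \<Sum>y\<in>A r. if t @ [y] \<in> R then 1 else 0)" by (rule sum.swap)
  also have "\<dots> = (\<Sum>t\<in>Tup A r. card {y\<in>A r. t @ [y] \<in> R})"
    using card_filter_sum[OF fA] by simp
  finally show ?thesis .
qed



definition ent :: "'a list list \<Rightarrow> nat \<times> nat \<Rightarrow> 'a" where
  "ent X = (\<lambda>(i,a). X!i!a)"

lemma cfg_eq:
  assumes "X \<in> Cfg m A k" "Y \<in> Cfg m A k" "\<forall>i<k. \<forall>a<m. X!i!a = Y!i!a"
  shows "X = Y"
proof (rule nth_equalityI)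
  show "length X = length Y" using assms by (simp add: Cfg_def)
  fix i assume "i < length X"
  then have i: "i < k" using assms by (simp add: Cfg_def)
  show "X!i = Y!i"
    by (rule nth_equalityI) (use assms i in \<open>auto simp: Cfg_def\<close>)
qed

lemma bad_bound:
  assumes A: "\<forall>i<k. finite (A i) \<and> card (A i) = n" and r: "r < k" and m: "m \<ge> 1"
    and i: "i < k" and ab: "a < b" "b < m"
  shows "card {X\<in>Cfg m A k. X!r!0 = v \<and> X!i!a = X!i!b} \<le> n ^ (k*m - 2)"
proof -
  define D where "D = ({..<k} \<times> {..<m}) - {(r,0),(i,b)}"
  have finD: "finite D" unfolding D_def by auto
  have cD: "card D = k*m - 2"
  proof -
    have "(r,0) \<noteq> (i,b)" using ab by auto
    moreover have "{(r,0),(i,b)} \<subseteq> {..<k} \<times> {..<m}" using r m i ab by auto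
    ultimately show ?thesis unfolding D_def by (simp add: card_Diff_subset card_cartesian_product)
  qed
  define \<psi> where "\<psi> X = restrict (ent X) D" for X :: "'a list list"
  have inj: "inj_on \<psi> {X\<in>Cfg m A k. X!r!0 = v \<and> X!i!a = X!i!b}"
  proof (rule inj_onI)
    fix X Y assume X: "X \<in> {X\<in>Cfg m A k. X!r!0 = v \<and> X!i!a = X!i!b}" and Y: "Y \<in> {X\<in>Cfg m A k. X!r!0 = v \<and> X!i!a = X!i!b}"
      and eq: "\<psi> X = \<psi> Y"
    have onD: "X!i'!a' = Y!i'!a'" if "(i',a') \<in> D" for i' a'
    proof -
      have "\<psi> X (i',a') = \<psi> Y (i',a')" using eq by simp
      then show ?thesis using that by (simp add: \<psi>_def ent_def)
    qed
    have ia: "X!i!a = Y!i!a"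
    proof (cases "(i,a) = (r,0)")
      case True then show ?thesis using X Y by auto
    next
      case False
      then have "(i,a) \<in> D" unfolding D_def using i ab by auto
      then show ?thesis using onD by auto
    qed
    show "X = Y"
    proof (rule cfg_eq[of X m A k Y])
      show "\<forall>i'<k. \<forall>a'<m. X!i'!a' = Y!i'!a'"
      proof (intro allI impI)
        fix i' a' assume "i' < k" "a' < m"
        show "X!i'!a' = Y!i'!a'"
        proof (cases "(i',a') = (r,0)")
          case True then show ?thesis using X Y by auto
        next
          case F1: False
          show ?thesis
          proof (cases "(i',a') = (i,b)")
            case True then show ?thesis using X Y ia by auto
          next
            case False
            then have "(i',a') \<in> D" unfolding D_def using F1 \<open>i' < k\<close> \<open>a' < m\<close> by simp
            then show ?thesis using onD by auto
          qed
        qed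
      qed
    qed (use X Y in auto)
  qed
  have img: "\<psi> ` {X\<in>Cfg m A k. X!r!0 = v \<and> X!i!a = X!i!b} \<subseteq> PiE D (\<lambda>p. A (fst p))"
  proof
    fix f assume "f \<in> \<psi> ` {X\<in>Cfg m A k. X!r!0 = v \<and> X!i!a = X!i!b}"
    then obtain X where X: "X \<in> Cfg m A k" "f = \<psi> X" by auto
    show "f \<in> PiE D (\<lambda>p. A (fst p))"
    proof (rule PiE_I)
      fix p assume "p \<in> D"
      then obtain i' a' where p: "p = (i',a')" "i' < k" "a' < m" unfolding D_def by auto
      then show "f p \<in> A (fst p)" using X \<open>p \<in> D\<close> unfolding \<psi>_def ent_def Cfg_def
        by (auto simp: subset_iff)
    next
      fix p assume "p \<notin> D" then show "f p = undefined" using X by (simp add: \<psi>_def)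
    qed
  qed
  have "card {X\<in>Cfg m A k. X!r!0 = v \<and> X!i!a = X!i!b} \<le> card (PiE D (\<lambda>p. A (fst p)))"
    by (rule card_inj_on_le[OF inj img]) (use finD A D_def in \<open>auto intro!: finite_PiE\<close>)
  also have "\<dots> = (\<Prod>p\<in>D. card (A (fst p)))" by (rule card_PiE[OF finD])
  also have "\<dots> = (\<Prod>p\<in>D. n)" by (rule prod.cong) (use A D_def in auto)
  also have "\<dots> = n ^ (k*m - 2)" using cD by simp
  finally show ?thesis .
qed

lemma bad_total:
  assumes A: "\<forall>i<k. finite (A i) \<and> card (A i) = n" and r: "r < k" and m: "m \<ge> 1"
  shows "card {X\<in>Cfg m A k. X!r!0 = v \<and> \<not> (\<forall>i<k. distinct (X!i))} \<le> k*m*m * n ^ (k*m - 2)"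
proof -
  define T where "T = {(i,a,b). i < k \<and> a < m \<and> b < m \<and> a < b}"
  define B where "B \<tau> = {X\<in>Cfg m A k. X!r!0 = v \<and> X!(fst \<tau>)!(fst (snd \<tau>)) = X!(fst \<tau>)!(snd (snd \<tau>))}" for \<tau>
  have Tsub: "T \<subseteq> {..<k} \<times> {..<m} \<times> {..<m}" unfolding T_def by auto
  have finT: "finite T" using Tsub finite_subset by blast
  have cT: "card T \<le> k*m*m"
    using card_mono[OF _ Tsub] by (simp add: card_cartesian_product)
  have sub: "{X\<in>Cfg m A k. X!r!0 = v \<and> \<not> (\<forall>i<k. distinct (X!i))} \<subseteq> (\<Union>\<tau>\<in>T. B \<tau>)"
  proof
    fix X assume X: "X \<in> {X\<in>Cfg m A k. X!r!0 = v \<and> \<not> (\<forall>i<k. distinct (X!i))}"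
    then obtain i where i: "i < k" "\<not> distinct (X!i)" by auto
    have len: "length (X!i) = m" using X i by (auto simp: Cfg_def)
    obtain a b where ab: "a < m" "b < m" "a \<noteq> b" "X!i!a = X!i!b"
      using i(2) len by (auto simp: distinct_conv_nth)
    show "X \<in> (\<Union>\<tau>\<in>T. B \<tau>)"
    proof (cases "a < b")
      case True
      then have "(i,a,b) \<in> T" using ab i unfolding T_def by auto
      then show ?thesis using X ab unfolding B_def by force
    next
      case False
      then have "(i,b,a) \<in> T" using ab i unfolding T_def by auto
      then show ?thesis using X ab unfolding B_def by force
    qed
  qed
  have finC: "finite (Cfg m A k)" using Cfg_finite[of k A m] A by auto
  have "card {X\<in>Cfg m A k. X!r!0 = v \<and> \<not> (\<forall>i<k. distinct (X!i))} \<le> card (\<Union>\<tau>\<in>T. B \<tau>)"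
    by (rule card_mono[OF _ sub]) (use finT finC in \<open>auto simp: B_def\<close>)
  also have "\<dots> \<le> (\<Sum>\<tau>\<in>T. card (B \<tau>))" by (rule card_UN_le[OF finT])
  also have "\<dots> \<le> (\<Sum>\<tau>\<in>T. n ^ (k*m - 2))"
  proof (rule sum_mono)
    fix \<tau> assume "\<tau> \<in> T"
    then obtain i a b where "\<tau> = (i,a,b)" "i < k" "a < b" "b < m" unfolding T_def by auto
    then show "card (B \<tau>) \<le> n ^ (k*m - 2)" unfolding B_def using bad_bound[OF A r m] by simp
  qed
  also have "\<dots> \<le> k*m*m * n ^ (k*m - 2)" using cT by simp
  finally show ?thesis .
qed

lemma fibre_bound:
  assumes fG: "finite G" and GC: "G \<subseteq> Cfg m A k"
  shows "card G \<le> card ((\<lambda>X. ent X ` ({..<k} \<times> {..<m})) ` G) * (k*m)^(k*m)"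
proof -
  define Pos where "Pos = {..<k} \<times> {..<(m::nat)}"
  define Wf where "Wf X = ent X ` Pos" for X :: "'a list list"
  have cPos: "card Pos = k*m" unfolding Pos_def by (simp add: card_cartesian_product)
  have fibre: "card {X\<in>G. Wf X = W} \<le> (k*m)^(k*m)" if W: "W \<in> Wf ` G" for W
  proof -
    obtain X0 where "X0 \<in> G" "W = Wf X0" using W by auto
    then have cW: "card W \<le> k*m" unfolding Wf_def using cPos card_image_le[of Pos "ent X0"] Pos_def by auto
    have finW: "finite W" using \<open>W = Wf X0\<close> unfolding Wf_def Pos_def by auto
    have inj: "inj_on (\<lambda>X. restrict (ent X) Pos) {X\<in>G. Wf X = W}"
    proof (rule inj_onI)
      fix X Y assume XY: "X \<in> {X\<in>G. Wf X = W}" "Y \<in> {X\<in>G. Wf X = W}" and eq: "restrict (ent X) Pos = restrict (ent Y) Pos"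
      have "\<forall>i<k. \<forall>a<m. X!i!a = Y!i!a"
      proof (intro allI impI)
        fix i a assume "i < k" "a < m"
        moreover have "restrict (ent X) Pos (i,a) = restrict (ent Y) Pos (i,a)" using eq by simp
        ultimately show "X!i!a = Y!i!a" by (simp add: Pos_def ent_def)
      qed
      then show "X = Y" using cfg_eq[of X m A k Y] XY GC by auto
    qed
    have sub: "(\<lambda>X. restrict (ent X) Pos) ` {X\<in>G. Wf X = W} \<subseteq> PiE Pos (\<lambda>_. W)"
    proof
      fix f assume "f \<in> (\<lambda>X. restrict (ent X) Pos) ` {X\<in>G. Wf X = W}"
      then obtain X where "f = restrict (ent X) Pos" "Wf X = W" by auto
      moreover have "restrict (ent X) Pos \<in> PiE Pos (\<lambda>_. W)"
        unfolding restrict_PiE_iff using \<open>Wf X = W\<close> unfolding Wf_def by blast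
      ultimately show "f \<in> PiE Pos (\<lambda>_. W)" by simp
    qed
    have "card {X\<in>G. Wf X = W} \<le> card (PiE Pos (\<lambda>_. W))"
      by (rule card_inj_on_le[OF inj sub], rule finite_PiE) (auto simp: finW Pos_def)
    also have "\<dots> = card W ^ (k*m)" using cPos by (simp add: card_PiE Pos_def)
    also have "\<dots> \<le> (k*m)^(k*m)" using cW by (simp add: power_mono)
    finally show ?thesis .
  qed
  have "G = (\<Union>W\<in>Wf ` G. {X\<in>G. Wf X = W})" by blast
  then have "card G = card (\<Union>W\<in>Wf ` G. {X\<in>G. Wf X = W})" by (rule arg_cong)
  also have "\<dots> \<le> (\<Sum>W\<in>Wf ` G. card {X\<in>G. Wf X = W})"
    by (rule card_UN_le[OF finite_imageI[OF fG]])
  also have "\<dots> \<le> (\<Sum>W\<in>Wf ` G. (k*m)^(k*m))" by (intro sum_mono fibre)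
  also have "\<dots> = card (Wf ` G) * (k*m)^(k*m)" by simp
  finally show ?thesis unfolding Wf_def Pos_def .
qed



lemma copy_exists:
  fixes PF :: "nat \<Rightarrow> 'b set" and X :: "nat list list"
  assumes kpF: "kpartite_kgraph k PF EF" and cF: "\<forall>i<k. card (PF i) = m"
    and Adisj: "\<forall>i<k. \<forall>j<k. i \<noteq> j \<longrightarrow> A i \<inter> A j = {}" and AV: "\<forall>i<k. A i \<subseteq> vset k P"
    and X: "X \<in> Cfg m A k" "cpl m R X" "\<forall>i<k. distinct (X!i)" and RE: "\<forall>t\<in>R. set t \<in> E"
  shows "\<exists>E'. (ent X ` ({..<k} \<times> {..<m}), E') \<in> copies (vset k P) E (vset k PF) EF"
proof -
  define Pos where "Pos = {..<k} \<times> {..<m}"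
  define W where "W = ent X ` Pos"
  have lenX: "length X = k" and lenXi: "\<forall>i<k. length (X!i) = m \<and> set (X!i) \<subseteq> A i"
    using X(1) by (auto simp: Cfg_def)
  have entA: "ent X (i,a) \<in> A i" if "i < k" "a < m" for i a
  proof -
    have "X!i!a \<in> set (X!i)" using lenXi that by simp
    moreover have "set (X!i) \<subseteq> A i" using lenXi that by simp
    ultimately show ?thesis by (auto simp: ent_def)
  qed
  have injX: "inj_on (ent X) Pos"
  proof (rule inj_onI)
    fix p q assume pq: "p \<in> Pos" "q \<in> Pos" "ent X p = ent X q"
    obtain i a where p: "p = (i,a)" "i < k" "a < m" using pq(1) unfolding Pos_def by auto
    obtain j b where q: "q = (j,b)" "j < k" "b < m" using pq(2) unfolding Pos_def by auto
    have "ent X (i,a) \<in> A i \<inter> A j" using entA p q pq(3) by (metis IntI)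
    then have ij: "i = j" using Adisj p q by blast
    then have "X!i!a = X!i!b" using pq(3) p q by (simp add: ent_def)
    then have "a = b" using X(3) lenXi p q ij by (simp add: nth_eq_iff_index_eq)
    then show "p = q" using p q ij by simp
  qed
  have bijX: "bij_betw (ent X) Pos W" unfolding W_def using injX by (simp add: bij_betw_def)
  have "\<forall>i. \<exists>g. i < k \<longrightarrow> bij_betw g {..<m} (PF i)"
  proof
    fix i
    show "\<exists>g. i < k \<longrightarrow> bij_betw g {..<m} (PF i)"
    proof (cases "i < k")
      case True
      have "finite (PF i)" using kpF True unfolding kpartite_kgraph_def by auto
      then obtain g where "bij_betw g {0..<card (PF i)} (PF i)" using ex_bij_betw_nat_finite by blast
      then show ?thesis using cF True by (auto simp: atLeast0LessThan)
    qed auto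
  qed
  then obtain g where g: "\<And>i. i < k \<Longrightarrow> bij_betw (g i) {..<m} (PF i)" by metis
  define \<gamma> where "\<gamma> p = g (fst p) (snd p)" for p
  have PFdisj: "\<forall>i<k. \<forall>j<k. i \<noteq> j \<longrightarrow> PF i \<inter> PF j = {}" using kpF unfolding kpartite_kgraph_def by auto
  have g_in: "g i a \<in> PF i" if "i < k" "a < m" for i a using g[OF that(1)] that(2) bij_betwE by blast
  have bijG: "bij_betw \<gamma> Pos (vset k PF)"
  proof (rule bij_betw_imageI)
    show "inj_on \<gamma> Pos"
    proof (rule inj_onI)
      fix p q assume pq: "p \<in> Pos" "q \<in> Pos" "\<gamma> p = \<gamma> q"
      obtain i a where p: "p = (i,a)" "i < k" "a < m" using pq(1) unfolding Pos_def by auto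
      obtain j b where q: "q = (j,b)" "j < k" "b < m" using pq(2) unfolding Pos_def by auto
      have "g i a \<in> PF i \<inter> PF j" using g_in p q pq(3) unfolding \<gamma>_def by (metis IntI fst_conv snd_conv)
      then have ij: "i = j" using PFdisj p q by blast
      then have "a = b" using pq(3) p q g[OF p(2)] unfolding \<gamma>_def bij_betw_def inj_on_def by auto
      then show "p = q" using p q ij by simp
    qed
    show "\<gamma> ` Pos = vset k PF"
    proof
      show "\<gamma> ` Pos \<subseteq> vset k PF" unfolding Pos_def vset_def \<gamma>_def using g_in by force
      show "vset k PF \<subseteq> \<gamma> ` Pos"
      proof
        fix u assume "u \<in> vset k PF"
        then obtain i where i: "i < k" "u \<in> PF i" unfolding vset_def by auto
        then have "u \<in> g i ` {..<m}" using g[OF i(1)] unfolding bij_betw_def by auto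
        then obtain a where "a < m" "g i a = u" by auto
        then show "u \<in> \<gamma> ` Pos" unfolding Pos_def \<gamma>_def using i by force
      qed
    qed
  qed
  define f where "f = \<gamma> \<circ> inv_into Pos (ent X)"
  have bijf: "bij_betw f W (vset k PF)" unfolding f_def
    by (rule bij_betw_trans[OF bij_betw_inv_into[OF bijX] bijG])
  have injf: "inj_on f W" using bijf by (simp add: bij_betw_def)
  have f_ent: "f (ent X p) = \<gamma> p" if "p \<in> Pos" for p
    unfolding f_def using injX that by simp
  define E' where "E' = {e' \<in> Pow W. f ` e' \<in> EF}"
  have WV: "W \<subseteq> vset k P" unfolding W_def Pos_def using entA AV by force
  have E'E: "E' \<subseteq> E"
  proof
    fix e' assume "e' \<in> E'"
    then have e'W: "e' \<subseteq> W" and eF: "f ` e' \<in> EF" unfolding E'_def by auto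
    define e where "e = f ` e'"
    have "\<forall>i. \<exists>u. i < k \<longrightarrow> e \<inter> PF i = {u}"
    proof
      fix i show "\<exists>u. i < k \<longrightarrow> e \<inter> PF i = {u}"
      proof (cases "i < k")
        case True
        then have "card (e \<inter> PF i) = 1" using edge_meets_all[OF kpF eF[folded e_def] True] by simp
        then show ?thesis using True by (metis card_1_singletonE)
      qed auto
    qed
    then obtain u where u: "\<And>i. i < k \<Longrightarrow> e \<inter> PF i = {u i}" by metis
    define a where "a i = inv_into {..<m} (g i) (u i)" for i
    have a: "a i < m" "g i (a i) = u i" if "i < k" for i
    proof -
      have "u i \<in> PF i" using u[OF that] by auto
      then have "u i \<in> g i ` {..<m}" using g[OF that] unfolding bij_betw_def by auto
      show "a i < m" unfolding a_def using inv_into_into[OF \<open>u i \<in> g i ` {..<m}\<close>] by simp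
      show "g i (a i) = u i" unfolding a_def using f_inv_into_f[OF \<open>u i \<in> g i ` {..<m}\<close>] .
    qed
    define al where "al = map a [0..<k]"
    have "tr X al \<in> R" using X(2) lenX a unfolding cpl_def al_def by auto
    then have trE: "set (tr X al) \<in> E" using RE by auto
    have "e' = set (tr X al)"
    proof
      show "e' \<subseteq> set (tr X al)"
      proof
        fix x assume "x \<in> e'"
        then have "x \<in> W" using e'W by auto
        then obtain i b where ib: "i < k" "b < m" "x = ent X (i,b)" unfolding W_def Pos_def by auto
        then have "f x = g i b" using f_ent[of "(i,b)"] unfolding Pos_def \<gamma>_def by simp
        then have "g i b \<in> f ` e'" using \<open>x \<in> e'\<close> by (metis image_eqI)
        then have "g i b \<in> e \<inter> PF i" using g_in ib unfolding e_def by auto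
        then have "g i b = g i (a i)" using u[OF ib(1)] a[OF ib(1)] by auto
        then have "b = a i" using g[OF ib(1)] ib(2) a[OF ib(1)] unfolding bij_betw_def inj_on_def by auto
        then show "x \<in> set (tr X al)" using ib lenX unfolding tr_def al_def ent_def by auto
      qed
      show "set (tr X al) \<subseteq> e'"
      proof
        fix x assume "x \<in> set (tr X al)"
        then obtain i where i: "i < k" "x = X!i!(a i)" using lenX unfolding tr_def al_def by auto
        then have xent: "x = ent X (i, a i)" by (simp add: ent_def)
        have pos: "(i, a i) \<in> Pos" using i a unfolding Pos_def by auto
        then have xW: "x \<in> W" unfolding W_def xent by auto
        have "f x = u i" using f_ent[OF pos] a[OF i(1)] xent unfolding \<gamma>_def by simp
        then have "f x \<in> e" using u[OF i(1)] by auto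
        then obtain x' where "x' \<in> e'" "f x' = f x" unfolding e_def by auto
        then have "x' = x" using injf xW e'W unfolding inj_on_def by auto
        then show "x \<in> e'" using \<open>x' \<in> e'\<close> by simp
      qed
    qed
    then show "e' \<in> E" using trE by simp
  qed
  have bijE: "bij_betw (\<lambda>e. f ` e) E' EF"
  proof (rule bij_betw_imageI)
    show "inj_on (\<lambda>e. f ` e) E'"
      by (rule inj_onI) (use inj_on_image_eq_iff[OF injf] in \<open>auto simp: E'_def\<close>)
    show "(\<lambda>e. f ` e) ` E' = EF"
    proof
      show "(\<lambda>e. f ` e) ` E' \<subseteq> EF" unfolding E'_def by auto
      show "EF \<subseteq> (\<lambda>e. f ` e) ` E'"
      proof
        fix e assume eF: "e \<in> EF"
        then have "e \<subseteq> vset k PF" using kpF unfolding kpartite_kgraph_def by auto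
        then have fe: "f ` (inv_into W f ` e) = e"
          using image_inv_into_cancel[OF bij_betw_imp_surj_on[OF bijf]] by simp
        have "inv_into W f ` e \<subseteq> W"
        proof
          fix y assume "y \<in> inv_into W f ` e"
          then obtain z where z: "z \<in> e" "y = inv_into W f z" by auto
          then have "z \<in> f ` W" using \<open>e \<subseteq> vset k PF\<close> bij_betw_imp_surj_on[OF bijf] by auto
          then show "y \<in> W" using z(2) by (simp add: inv_into_into)
        qed
        then have "inv_into W f ` e \<in> E'" unfolding E'_def using fe eF by auto
        then show "e \<in> (\<lambda>e. f ` e) ` E'" by (rule image_eqI[where x="inv_into W f ` e" and f="\<lambda>e. f ` e", OF fe[symmetric]])
      qed
    qed
  qed
  have "\<forall>e\<in>E'. e \<subseteq> W" unfolding E'_def by blast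
  moreover have "hg_iso W E' (vset k PF) EF" unfolding hg_iso_def using bijf bijE by blast
  ultimately have "(W, E') \<in> copies (vset k P) E (vset k PF) EF"
    unfolding copies_def using WV E'E by simp
  then show ?thesis unfolding W_def Pos_def by (rule exI)
qed



lemma snoc_Tup: "t \<in> Tup A r \<Longrightarrow> y \<in> A r \<Longrightarrow> t @ [y] \<in> Tup A (Suc r)"
  unfolding Tup_Suc by (rule image_eqI[where x="(t,y)"]) auto

lemma main_fixed:
  fixes PF :: "nat \<Rightarrow> 'b set" and P :: "nat \<Rightarrow> nat set"
  assumes k3: "k \<ge> 3" and m: "m \<ge> 1" and a0: "0 < \<alpha>"
    and kpF: "kpartite_kgraph k PF EF" and cF: "\<forall>i<k. card (PF i) = m"
    and kp: "kpartite_kgraph k P E" and cP: "\<forall>i<k. card (P i) = n" and n: "n > 0"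
    and cod: "real (min_codeg k P E) \<ge> \<alpha> * real n"
    and v: "v \<in> vset k P"
  shows "(\<alpha>^2)^((m^(k-1))*m) * real n ^ (k*m-1) - real (k*m*m) * real n^(k*m-2)
     \<le> real (card {c \<in> copies (vset k P) E (vset k PF) EF. v \<in> fst c}) * real ((k*m)^(k*m))"
proof -
  define r where "r = k - 1"
  have kr: "k = Suc r" and r2: "r \<ge> 2" using k3 unfolding r_def by auto
  obtain j where j: "j < k" "v \<in> P j" using v unfolding vset_def by auto
  define \<pi> where "\<pi> i = (if i = j then r else if i = r then j else i)" for i
  have \<pi>k: "\<pi> i < k" if "i < k" for i using that j kr unfolding \<pi>_def by auto
  have \<pi>inj: "inj_on \<pi> {..<k}" unfolding inj_on_def \<pi>_def by auto
  have \<pi>r: "\<pi> r = j" unfolding \<pi>_def by auto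
  define A where "A i = P (\<pi> i)" for i
  have Pfin: "\<forall>i<k. finite (P i)" and Pdisj: "\<forall>i<k. \<forall>j<k. i \<noteq> j \<longrightarrow> P i \<inter> P j = {}"
    using kp unfolding kpartite_kgraph_def by auto
  have hA: "\<forall>i<k. finite (A i) \<and> card (A i) = n" unfolding A_def using Pfin cP \<pi>k by auto
  have hA': "\<forall>i<Suc r. finite (A i) \<and> card (A i) = n" using hA kr by simp
  have Adisj: "\<forall>i<k. \<forall>j<k. i \<noteq> j \<longrightarrow> A i \<inter> A j = {}"
    unfolding A_def using Pdisj \<pi>k \<pi>inj unfolding inj_on_def by (meson lessThan_iff)
  have AV: "\<forall>i<k. A i \<subseteq> vset k P" unfolding A_def vset_def using \<pi>k by auto
  have vA: "v \<in> A r" unfolding A_def \<pi>r using j by simp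
  define R where "R = {t \<in> Tup A k. set t \<in> E}"
  have RT: "R \<subseteq> Tup A (Suc r)" unfolding R_def kr by auto
  have RE: "\<forall>t\<in>R. set t \<in> E" unfolding R_def by auto
  have codl: "\<alpha> * real n \<le> real (card {y\<in>P q. insert y (set s) \<in> E})"
    if s: "length s = r" "\<forall>i<r. s!i \<in> P (\<sigma> i)" "inj_on \<sigma> {..<r}" "\<forall>i<r. \<sigma> i < k"
      and q: "q < k" "q \<notin> \<sigma> ` {..<r}" for s \<sigma> q
  proof -
    have "card (set s) = r" "legal k P (set s)" "set s \<subseteq> vset k P" "set s \<inter> P q = {}"
      using list_parts[OF kp s] q by auto
    then have "min_codeg k P E \<le> card {y\<in>P q. insert y (set s) \<in> E}"
      using codeg[OF kp _ _ _ _ q(1)] k3 r_def by auto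
    then show ?thesis using cod by linarith
  qed
  have Tup_elem: "t!i \<in> A i" if "t \<in> Tup A L" "i < L" for t L i using that by (simp add: Tup_def)
  have cod1: "\<forall>t\<in>Tup A r. \<alpha> * real n \<le> real (card {y\<in>A r. t @ [y] \<in> R})"
  proof
    fix t assume t: "t \<in> Tup A r"
    have "{y\<in>A r. t @ [y] \<in> R} = {y\<in>P j. insert y (set t) \<in> E}"
      unfolding R_def using snoc_Tup[OF t] kr by (auto simp: A_def \<pi>r)
    moreover have "\<alpha> * real n \<le> real (card {y\<in>P j. insert y (set t) \<in> E})"
    proof (rule codl[of t \<pi> j])
      show "length t = r" using t by (simp add: Tup_def)
      show "\<forall>i<r. t!i \<in> P (\<pi> i)" using t by (simp add: Tup_def A_def)
      show "inj_on \<pi> {..<r}" using \<pi>inj kr by (auto intro: inj_on_subset)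
      show "\<forall>i<r. \<pi> i < k" using \<pi>k kr by auto
      show "j < k" using j by simp
      show "j \<notin> \<pi> ` {..<r}" using \<pi>inj kr \<pi>r unfolding inj_on_def by (metis lessThan_iff less_Suc_eq image_iff less_irrefl)
    qed
    ultimately show "\<alpha> * real n \<le> real (card {y\<in>A r. t @ [y] \<in> R})" by simp
  qed
  have Rv: "\<alpha> * real n ^ r \<le> real (card (sl R v))"
  proof -
    define r' where "r' = r - 1"
    have rr: "r = Suc r'" using r2 unfolding r'_def by auto
    have slT: "sl R v \<subseteq> Tup A (Suc r')" using sl_Tup[OF RT] rr by simp
    have finA': "\<forall>i<Suc r'. finite (A i)" using hA kr rr by auto
    have "card (sl R v) = (\<Sum>t\<in>Tup A r'. card {z\<in>A r'. t @ [z] \<in> sl R v})"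
      by (rule card_R_split2[OF finA' slT])
    moreover have "\<alpha> * real n \<le> real (card {z\<in>A r'. t @ [z] \<in> sl R v})" if t: "t \<in> Tup A r'" for t
    proof -
      define s where "s = t @ [v]"
      define \<sigma> where "\<sigma> i = (if i < r' then \<pi> i else \<pi> r)" for i
      have "{z\<in>A r'. t @ [z] \<in> sl R v} = {z\<in>P (\<pi> r'). insert z (set s) \<in> E}"
      proof -
        have "t @ [z] @ [v] \<in> Tup A k" if "z \<in> A r'" for z
          using snoc_Tup[OF snoc_Tup[OF t that] vA[unfolded rr]] kr rr by simp
        moreover have "set (t @ [z] @ [v]) = insert z (set (t @ [v]))" for z by auto
        ultimately show ?thesis unfolding sl_def R_def s_def by (auto simp: A_def simp del: set_append append.simps)
      qed
      moreover have "\<alpha> * real n \<le> real (card {z\<in>P (\<pi> r'). insert z (set s) \<in> E})"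
      proof (rule codl[of s \<sigma> "\<pi> r'"])
        show "length s = r" using t rr by (simp add: s_def Tup_def)
        show "\<forall>i<r. s!i \<in> P (\<sigma> i)"
        proof (intro allI impI)
          fix i assume "i < r"
          then consider "i < r'" | "i = r'" using rr by linarith
          then show "s!i \<in> P (\<sigma> i)"
          proof cases
            case 1 then show ?thesis using t unfolding s_def \<sigma>_def by (simp add: Tup_def A_def nth_append)
          next
            case 2 then show ?thesis using t vA unfolding s_def \<sigma>_def by (simp add: Tup_def A_def nth_append)
          qed
        qed
        show "inj_on \<sigma> {..<r}" unfolding inj_on_def \<sigma>_def using \<pi>inj rr kr unfolding inj_on_def
          by (metis lessThan_iff less_Suc_eq less_irrefl)
        show "\<forall>i<r. \<sigma> i < k" using \<pi>k rr kr unfolding \<sigma>_def by auto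
        show "\<pi> r' < k" using \<pi>k rr kr by auto
        show "\<pi> r' \<notin> \<sigma> ` {..<r}"
        proof
          assume "\<pi> r' \<in> \<sigma> ` {..<r}"
          then obtain i where i: "i < r" "\<pi> r' = \<sigma> i" by auto
          then show False using \<pi>inj rr kr unfolding \<sigma>_def inj_on_def
            by (metis lessThan_iff less_Suc_eq less_irrefl)
        qed
      qed
      ultimately show ?thesis by simp
    qed
    then have "(\<Sum>t\<in>Tup A r'. \<alpha> * real n) \<le> (\<Sum>t\<in>Tup A r'. real (card {z\<in>A r'. t @ [z] \<in> sl R v}))"
      by (intro sum_mono) auto
    moreover have "card (Tup A r') = n ^ r'" using Tup_fin_card[of r' A n] hA kr rr by auto
    ultimately have "real n ^ r' * (\<alpha> * real n) \<le> real (card (sl R v))"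
      using \<open>card (sl R v) = _\<close> by simp
    then show ?thesis using rr by (simp add: mult_ac)
  qed
  define Q where "Q = {X\<in>Cfg m A (Suc r). cpl m R X \<and> X!r!0 = v}"
  have homQ: "(\<alpha>^2)^(m^r*m) * real n ^ (m * Suc r - 1) \<le> real (card Q)"
    unfolding Q_def by (rule homv[OF hA' n m RT vA _ cod1 Rv]) (use a0 in simp)
  define G where "G = {X\<in>Q. \<forall>i<k. distinct (X!i)}"
  have bad: "card {X\<in>Cfg m A k. X!r!0 = v \<and> \<not> (\<forall>i<k. distinct (X!i))} \<le> k*m*m * n ^ (k*m - 2)"
    by (rule bad_total[OF hA _ m]) (use kr in simp)
  have finC: "finite (Cfg m A k)" using Cfg_finite[of k A m] hA by auto
  have "Q \<subseteq> G \<union> {X\<in>Cfg m A k. X!r!0 = v \<and> \<not> (\<forall>i<k. distinct (X!i))}"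
    unfolding Q_def G_def using kr by auto
  then have "card Q \<le> card (G \<union> {X\<in>Cfg m A k. X!r!0 = v \<and> \<not> (\<forall>i<k. distinct (X!i))})"
    by (rule card_mono[rotated]) (use finC G_def Q_def kr in \<open>auto intro: finite_subset[OF _ finC]\<close>)
  also have "\<dots> \<le> card G + card {X\<in>Cfg m A k. X!r!0 = v \<and> \<not> (\<forall>i<k. distinct (X!i))}"
    by (rule card_Un_le)
  finally have "card Q \<le> card G + card {X\<in>Cfg m A k. X!r!0 = v \<and> \<not> (\<forall>i<k. distinct (X!i))}" .
  then have "card Q \<le> card G + k*m*m * n ^ (k*m - 2)" using bad by linarith
  then have "real (card Q) \<le> real (card G + k*m*m * n ^ (k*m - 2))" by (rule of_nat_mono)
  then have cG: "real (card Q) - real (k*m*m) * real n ^ (k*m - 2) \<le> real (card G)"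
    by simp
  have GC: "G \<subseteq> Cfg m A k" unfolding G_def Q_def kr by auto
  have finG: "finite G" using GC finC finite_subset by auto
  have fib: "card G \<le> card ((\<lambda>X. ent X ` ({..<k} \<times> {..<m})) ` G) * (k*m)^(k*m)"
    by (rule fibre_bound[OF finG GC])
  define C where "C = {c \<in> copies (vset k P) E (vset k PF) EF. v \<in> fst c}"
  have finV: "finite (vset k P)" using Pfin unfolding vset_def by auto
  have EV: "E \<subseteq> Pow (vset k P)" using kp unfolding kpartite_kgraph_def by auto
  have "C \<subseteq> Pow (vset k P) \<times> Pow E" unfolding C_def copies_def by auto
  moreover have "finite (Pow (vset k P) \<times> Pow E)" using finV EV finite_subset[OF EV] by auto
  ultimately have finCC: "finite C" by (rule finite_subset)
  have sub: "(\<lambda>X. ent X ` ({..<k} \<times> {..<m})) ` G \<subseteq> fst ` C"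
  proof
    fix W assume "W \<in> (\<lambda>X. ent X ` ({..<k} \<times> {..<m})) ` G"
    then obtain X where X: "X \<in> G" "W = ent X ` ({..<k} \<times> {..<m})" by auto
    have XQ: "X \<in> Cfg m A k" "cpl m R X" "X!r!0 = v" "\<forall>i<k. distinct (X!i)"
      using X(1) unfolding G_def Q_def kr by auto
    obtain E' where E': "(W, E') \<in> copies (vset k P) E (vset k PF) EF"
      using copy_exists[OF kpF cF Adisj AV XQ(1,2,4) RE] X(2) by auto
    have "v \<in> W" unfolding X(2) using XQ(3) kr m
      by (intro image_eqI[where x="(r,0)"]) (auto simp: ent_def)
    then have "(W, E') \<in> C" unfolding C_def using E' by simp
    then show "W \<in> fst ` C" by (rule image_eqI[rotated]) simp
  qed
  have "card ((\<lambda>X. ent X ` ({..<k} \<times> {..<m})) ` G) \<le> card C"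
    using card_mono[OF finite_imageI[OF finCC] sub] card_image_le[OF finCC, of fst] by linarith
  then have "card G \<le> card C * (k*m)^(k*m)" using fib by (meson le_trans mult_le_mono1)
  then have "real (card G) \<le> real (card C) * real ((k*m)^(k*m))"
    by (metis of_nat_le_iff of_nat_mult)
  moreover have "m * Suc r - 1 = k*m - 1" using kr by (simp add: mult.commute)
  ultimately show ?thesis using homQ cG unfolding C_def r_def by simp
qed



theorem lemma3p3:
  fixes k m :: nat and \<alpha> :: real
    and PF :: "nat \<Rightarrow> 'b set" and EF :: "'b set set"
  assumes "k \<ge> 3" and "m \<ge> 1" and "0 < \<alpha>" and "\<alpha> < 1"
    and "kpartite_kgraph k PF EF"
    and "\<forall>i<k. card (PF i) = m"
  shows "\<exists>\<eta>::real. \<eta> > 0 \<and> (\<exists>n0::nat. \<forall>n\<ge>n0. \<forall>(P :: nat \<Rightarrow> nat set) (E :: nat set set).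
           kpartite_kgraph k P E \<longrightarrow> (\<forall>i<k. card (P i) = n) \<longrightarrow>
           real (min_codeg k P E) \<ge> \<alpha> * real n \<longrightarrow>
           (\<forall>v\<in>vset k P.
              real (card {c \<in> copies (vset k P) E (vset k PF) EF. v \<in> fst c})
                \<ge> \<eta> * real n ^ (k * m - 1)))"
proof -
  define \<beta> where "\<beta> = (\<alpha>^2)^((m^(k-1))*m)"
  have b0: "\<beta> > 0" unfolding \<beta>_def using assms(3) by simp
  define K where "K = real (k*m*m)"
  define M where "M = real ((k*m)^(k*m))"
  have M0: "M > 0" unfolding M_def using assms(1,2) by simp
  define n0 where "n0 = nat \<lceil>2*K/\<beta>\<rceil> + 1"
  define \<eta> where "\<eta> = \<beta> / (2 * M)"
  have e0: "\<eta> > 0" unfolding \<eta>_def using b0 M0 by simp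
  have "3 * 1 \<le> k * m" using assms(1,2) by (rule mult_le_mono)
  then have ex: "k*m - 1 = Suc (k*m - 2)" by linarith
  show ?thesis
  proof (intro exI[of _ \<eta>] conjI e0 exI[of _ n0] allI impI ballI)
    fix n :: nat and P :: "nat \<Rightarrow> nat set" and E :: "nat set set" and v :: nat
    assume n: "n0 \<le> n" and kp: "kpartite_kgraph k P E" and cP: "\<forall>i<k. card (P i) = n"
      and cod: "\<alpha> * real n \<le> real (min_codeg k P E)" and v: "v \<in> vset k P"
    have npos: "n > 0" using n unfolding n0_def by simp
    have "2*K/\<beta> \<le> real (nat \<lceil>2*K/\<beta>\<rceil>)" by linarith
    then have nb: "2*K/\<beta> \<le> real n" using n unfolding n0_def by linarith
    then have nK: "2*K \<le> \<beta> * real n" using b0 by (simp add: field_simps)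
    define c where "c = real (card {c \<in> copies (vset k P) E (vset k PF) EF. v \<in> fst c})"
    have mf: "\<beta> * real n ^ (k*m-1) - K * real n^(k*m-2) \<le> c * M"
      using main_fixed[OF assms(1,2,3,5,6) kp cP npos cod v] unfolding \<beta>_def K_def M_def c_def by simp
    have "K * real n^(k*m-2) \<le> (\<beta> * real n / 2) * real n^(k*m-2)"
      using nK by (intro mult_right_mono) auto
    also have "\<dots> = \<beta> / 2 * real n ^ (k*m-1)" unfolding ex by simp
    finally have "\<beta> / 2 * real n ^ (k*m-1) \<le> c * M" using mf by linarith
    then have "\<beta> / (2*M) * real n ^ (k*m-1) \<le> c" using M0 by (simp add: field_simps)
    then show "\<eta> * real n ^ (k * m - 1) \<le> real (card {c \<in> copies (vset k P) E (vset k PF) EF. v \<in> fst c})"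
      unfolding \<eta>_def c_def .
  qed
qed


end
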